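(* In the setting below, the positivity region $W^+_{\mathrm{AdS}^d}(h'')$ of $h''$ in $\mathrm{AdS}^d$ satisfies: (a) $W^+_{\mathrm{AdS}^d}(h'')\subseteq\eta(V)$, and $\eta^{-1}(W^+_{\mathrm{AdS}^d}(h''))=W_V^+(h'')\setminus\{v\in V:\beta(v,v)=-1\}$, where $W_V^+(h'')=\{v\in V:v_{d-1}>|v_0|\}$. (b) $W^+_{\mathrm{AdS}^d}(h'')$ has exactly two connected components. (c) As causal manifolds, these connected components are not globally hyperbolic.
   Context: $V=\mathbb R^{1,d-1}$ with $\beta(v,w)=v_0w_0-v_1w_1-\dots-v_{d-1}w_{d-1}$ and open positive cone $V_+=\{v:v_0>\sqrt{v_1^2+\dots+v_{d-1}^2}\}$. $\mathbb R^{2,d}=\mathbb R\oplus V\oplus\mathbb R$ with basis $e_1,\dots,e_{d+2}$ (so $e_{j+2}$ corresponds to the $j$-th coordinate of $V$) and form $\tilde\beta((t,v,s),(t',v',s'))=tt'+\beta(v,v')-ss'$. $Q=\{[x]\in\mathbb P(\mathbb R^{2,d}):\tilde\beta(x,x)=0\}$, and $\eta:V\to Q$, $\eta(v)=[\tfrac{1-\beta(v,v)}2:v:-\tfrac{1+\beta(v,v)}2]$, an open dense embedding. $Q$ carries the unique $\mathrm{SO}_{2,d}(\mathbb R)_e$-invariant causal structure for which $\eta$ maps the constant cone field $\overline{V_+}$ on $V$ to it. $\mathrm{AdS}^d=\{x\in\operatorname{span}(e_1,\dots,e_{d+1}):x_1^2+x_2^2-x_3^2-\dots-x_{d+1}^2=1\}$,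 identified via $x\mapsto[x-e_{d+2}]$ with the open subset $\{[x]\in Q:x_{d+2}\ne0\}$ and carrying the induced causal structure. $h''\in\mathfrak{so}_{2,d}(\mathbb R)$ is defined by $h''e_2=e_{d+1}$, $h''e_{d+1}=e_2$, $h''e_j=0$ otherwise. Positivity region: $W_N^+(x)=\{n\in N:\frac d{dt}|_{t=0}\exp(tx).n\in C_n^\circ\}$ (for $V$, using the constant cones $\overline{V_+}$). A causal manifold $U$ is globally hyperbolic if for all $a,b\in U$ the set of points lying on future-directed causal curves in $U$ from $a$ to $b$ has compact closure in $U$. *)

theory Defs
  imports "HOL-Analysis.Analysis"
begin

text \<open>V = R^{1,d-1} is modelled as real^'n (CARD('n) = d), with two
distinct distinguished coordinates: i0 (the time coordinate v_0) and iL (the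
coordinate v_{d-1}). R^{2,d} = R (+) V (+) R is modelled as real \<times> (real^'n) \<times> real,
written (t, v, s). The hyperplane span(e_1,...,e_{d+1}) = {(t,v,0)} is modelled as
real \<times> (real^'n).\<close>

definition mbeta :: "'n::finite \<Rightarrow> real^'n \<Rightarrow> real^'n \<Rightarrow> real" where
  "mbeta i0 v w = v$i0 * w$i0 - (\<Sum>j\<in>UNIV - {i0}. v$j * w$j)"

definition Vplus :: "'n::finite \<Rightarrow> (real^'n) set" where
  "Vplus i0 = {v. v$i0 > sqrt (\<Sum>j\<in>UNIV - {i0}. (v$j)^2)}"

definition eta_rep :: "'n::finite \<Rightarrow> real^'n \<Rightarrow> real \<times> (real^'n) \<times> real" where
  "eta_rep i0 v = ((1 - mbeta i0 v v) / 2, v, - (1 + mbeta i0 v v) / 2)"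

definition proj_eq :: "real \<times> (real^'n) \<times> real \<Rightarrow> real \<times> (real^'n) \<times> real \<Rightarrow> bool" where
  "proj_eq y z \<longleftrightarrow> y \<noteq> 0 \<and> z \<noteq> 0 \<and> (\<exists>c. c \<noteq> 0 \<and> y = c *\<^sub>R z)"

text \<open>AdS^d as a subset of span(e_1..e_{d+1}) and its embedding x \<mapsto> x - e_{d+2}.\<close>
definition AdS :: "'n::finite \<Rightarrow> (real \<times> (real^'n)) set" where
  "AdS i0 = {(t, v). t^2 + mbeta i0 v v = 1}"

definition ads_emb :: "real \<times> (real^'n) \<Rightarrow> real \<times> (real^'n) \<times> real" where
  "ads_emb x = (fst x, snd x, -1)"

text \<open>exp(s h'') for h'' e_2 = e_{d+1}, h'' e_{d+1} = e_2, h'' e_j = 0 otherwise: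
a hyperbolic rotation in the (v_0, v_{d-1}) plane.\<close>
definition boost :: "'n::finite \<Rightarrow> 'n \<Rightarrow> real \<Rightarrow> real^'n \<Rightarrow> real^'n" where
  "boost i0 iL s v = (\<chi> j. if j = i0 then cosh s * v$i0 + sinh s * v$iL
                        else if j = iL then sinh s * v$i0 + cosh s * v$iL else v$j)"

definition expH :: "'n::finite \<Rightarrow> 'n \<Rightarrow> real \<Rightarrow> real \<times> (real^'n) \<times> real \<Rightarrow> real \<times> (real^'n) \<times> real" where
  "expH i0 iL s y = (fst y, boost i0 iL s (fst (snd y)), snd (snd y))"

definition flowAdS :: "'n::finite \<Rightarrow> 'n \<Rightarrow> real \<Rightarrow> real \<times> (real^'n) \<Rightarrow> real \<times> (real^'n)" where
  "flowAdS i0 iL s x = (THE y. y \<in> AdS i0 \<and> proj_eq (ads_emb y) (expH i0 iL s (ads_emb x)))"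

definition flowV :: "'n::finite \<Rightarrow> 'n \<Rightarrow> real \<Rightarrow> real^'n \<Rightarrow> real^'n" where
  "flowV i0 iL s v = (THE w. proj_eq (eta_rep i0 w) (expH i0 iL s (eta_rep i0 v)))"

text \<open>Causal structure on AdS^d induced from Q: at x = (t,v) the tangent space is
x^\<perp> (w.r.t. the form bA below, which is the restriction of the form of R^{2,d}),
the cone is the closed future cone of bA on it, time-oriented by the vector field
J x = (-v_0, t e_0) (the generator of the rotation in the e_1,e_2 plane).\<close>
definition bA :: "'n::finite \<Rightarrow> real \<times> (real^'n) \<Rightarrow> real \<times> (real^'n) \<Rightarrow> real" where
  "bA i0 x y = fst x * fst y + mbeta i0 (snd x) (snd y)"

definition tanAdS :: "'n::finite \<Rightarrow> real \<times> (real^'n) \<Rightarrow> (real \<times> (real^'n)) set" where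
  "tanAdS i0 x = {z. bA i0 x z = 0}"

definition Jvec :: "'n::finite \<Rightarrow> real \<times> (real^'n) \<Rightarrow> real \<times> (real^'n)" where
  "Jvec i0 x = (- (snd x)$i0, \<chi> j. if j = i0 then fst x else 0)"

definition ads_cone :: "'n::finite \<Rightarrow> real \<times> (real^'n) \<Rightarrow> (real \<times> (real^'n)) set" where
  "ads_cone i0 x = {z \<in> tanAdS i0 x. bA i0 z z \<ge> 0 \<and> bA i0 z (Jvec i0 x) \<ge> 0}"

definition ads_cone_int :: "'n::finite \<Rightarrow> real \<times> (real^'n) \<Rightarrow> (real \<times> (real^'n)) set" where
  "ads_cone_int i0 x = {z \<in> tanAdS i0 x. bA i0 z z > 0 \<and> bA i0 z (Jvec i0 x) > 0}"

definition posAdS :: "'n::finite \<Rightarrow> 'n \<Rightarrow> (real \<times> (real^'n)) set" where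
  "posAdS i0 iL = {n \<in> AdS i0. \<exists>w. ((\<lambda>s. flowAdS i0 iL s n) has_vector_derivative w) (at 0)
                                    \<and> w \<in> ads_cone_int i0 n}"

definition posV :: "'n::finite \<Rightarrow> 'n \<Rightarrow> (real^'n) set" where
  "posV i0 iL = {v. \<exists>w. ((\<lambda>s. flowV i0 iL s v) has_vector_derivative w) (at 0) \<and> w \<in> Vplus i0}"

definition causal_curve :: "'n::finite \<Rightarrow> (real \<times> (real^'n)) set \<Rightarrow> (real \<Rightarrow> real \<times> (real^'n))
    \<Rightarrow> real \<times> (real^'n) \<Rightarrow> real \<times> (real^'n) \<Rightarrow> bool" where
  "causal_curve i0 U \<gamma> a b \<longleftrightarrow> \<gamma> piecewise_C1_differentiable_on {0..1} \<and>
     \<gamma> 0 = a \<and> \<gamma> 1 = b \<and> \<gamma> ` {0..1} \<subseteq> U \<and>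
     (\<forall>t\<in>{0..1}. \<forall>w. (\<gamma> has_vector_derivative w) (at t within {0..1}) \<longrightarrow> w \<in> ads_cone i0 (\<gamma> t))"

definition glob_hyp :: "'n::finite \<Rightarrow> (real \<times> (real^'n)) set \<Rightarrow> bool" where
  "glob_hyp i0 U \<longleftrightarrow> (\<forall>a\<in>U. \<forall>b\<in>U.
     compact (U \<inter> closure {\<gamma> t | \<gamma> t. causal_curve i0 U \<gamma> a b \<and> t \<in> {0..1}}))"

end

theory Submission
  imports Defs
begin


lemma mbeta_split:
  fixes i0 iL :: "'n::finite"
  assumes "i0 \<noteq> iL"
  shows "mbeta i0 v w = v$i0*w$i0 - v$iL*w$iL - (\<Sum>j\<in>UNIV-{i0,iL}. v$j * w$j)"
proof -
  have "UNIV - {i0} = insert iL (UNIV - {i0,iL})" using assms by auto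
  then show ?thesis unfolding mbeta_def by (simp add: sum.insert)
qed

lemma mbeta_scale1: "mbeta i0 (c *\<^sub>R v) w = c * mbeta i0 v w"
  unfolding mbeta_def by (simp add: sum_distrib_left algebra_simps)
lemma mbeta_scale2: "mbeta i0 v (c *\<^sub>R w) = c * mbeta i0 v w"
  unfolding mbeta_def by (simp add: sum_distrib_left algebra_simps)
lemma mbeta_sym: "mbeta i0 v w = mbeta i0 w v"
  unfolding mbeta_def by (simp add: algebra_simps)

lemma mbeta_le:
  fixes i0 iL :: "'n::finite"
  assumes "i0 \<noteq> iL"
  shows "mbeta i0 v v \<le> (v$i0)^2 - (v$iL)^2"
proof -
  have "0 \<le> (\<Sum>j\<in>UNIV-{i0,iL}. v$j * v$j)" by (intro sum_nonneg) simp
  then show ?thesis using mbeta_split[OF assms, of v v] by (simp add: power2_eq_square)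
qed

definition bst :: "'n::finite \<Rightarrow> 'n \<Rightarrow> real \<Rightarrow> real^'n \<Rightarrow> real^'n" where
  "bst i0 iL s v = v + ((cosh s - 1) * v$i0 + sinh s * v$iL) *\<^sub>R axis i0 1
      + (sinh s * v$i0 + (cosh s - 1) * v$iL) *\<^sub>R axis iL 1"

lemma boost_eq:
  fixes i0 iL :: "'n::finite"
  assumes "i0 \<noteq> iL"
  shows "boost i0 iL s v = bst i0 iL s v"
  using assms unfolding boost_def bst_def by (auto simp: vec_eq_iff axis_def algebra_simps)

lemma boost_mbeta:
  fixes i0 iL :: "'n::finite"
  assumes "i0 \<noteq> iL"
  shows "mbeta i0 (boost i0 iL s v) (boost i0 iL s v) = mbeta i0 v v"
proof -
  have c: "(cosh s)^2 - (sinh s)^2 = 1" by (simp add: cosh_square_eq)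
  have "(\<Sum>j\<in>UNIV-{i0,iL}. (boost i0 iL s v)$j * (boost i0 iL s v)$j) = (\<Sum>j\<in>UNIV-{i0,iL}. v$j * v$j)"
    by (rule sum.cong) (auto simp: boost_def)
  moreover have "(boost i0 iL s v)$i0 = cosh s * v$i0 + sinh s * v$iL"
    "(boost i0 iL s v)$iL = sinh s * v$i0 + cosh s * v$iL" using assms by (auto simp: boost_def)
  moreover have "(cosh s * a + sinh s * b) * (cosh s * a + sinh s * b) - (sinh s * a + cosh s * b) * (sinh s * a + cosh s * b) = a*a - b*b" for a b
  proof -
    have "(cosh s * a + sinh s * b) * (cosh s * a + sinh s * b) - (sinh s * a + cosh s * b) * (sinh s * a + cosh s * b) = ((cosh s)^2 - (sinh s)^2) * (a*a - b*b)"
      by (simp add: algebra_simps power2_eq_square)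
    then show ?thesis using c by simp
  qed
  ultimately show ?thesis unfolding mbeta_split[OF assms] by simp
qed

lemma flowAdS_eq:
  fixes i0 iL :: "'n::finite"
  assumes "i0 \<noteq> iL" "x \<in> AdS i0"
  shows "flowAdS i0 iL s x = (fst x, boost i0 iL s (snd x))"
  unfolding flowAdS_def
proof (rule the_equality)
  show "(fst x, boost i0 iL s (snd x)) \<in> AdS i0 \<and>
    proj_eq (ads_emb (fst x, boost i0 iL s (snd x))) (expH i0 iL s (ads_emb x))"
    using assms boost_mbeta[OF assms(1)]
    by (auto simp: AdS_def proj_eq_def ads_emb_def expH_def case_prod_beta zero_prod_def intro!: exI[of _ 1])
next
  fix y assume "y \<in> AdS i0 \<and> proj_eq (ads_emb y) (expH i0 iL s (ads_emb x))"
  then obtain c where "ads_emb y = c *\<^sub>R expH i0 iL s (ads_emb x)"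
    by (auto simp: proj_eq_def)
  then show "y = (fst x, boost i0 iL s (snd x))"
    by (cases y) (auto simp: ads_emb_def expH_def)
qed

lemma flowV_eq:
  fixes i0 iL :: "'n::finite"
  assumes "i0 \<noteq> iL"
  shows "flowV i0 iL s v = boost i0 iL s v"
  unfolding flowV_def
proof (rule the_equality)
  show "proj_eq (eta_rep i0 (boost i0 iL s v)) (expH i0 iL s (eta_rep i0 v))"
    using boost_mbeta[OF assms, of s v]
    by (auto simp: proj_eq_def eta_rep_def expH_def zero_prod_def intro!: exI[of _ 1])
next
  fix w assume "proj_eq (eta_rep i0 w) (expH i0 iL s (eta_rep i0 v))"
  then obtain c where c: "eta_rep i0 w = c *\<^sub>R expH i0 iL s (eta_rep i0 v)"
    by (auto simp: proj_eq_def)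
  let ?b = "mbeta i0 v v" let ?a = "mbeta i0 w w"
  have 1: "(1 - ?a)/2 = c * ((1 - ?b)/2)" and 2: "w = c *\<^sub>R boost i0 iL s v"
    and 3: "- (1 + ?a)/2 = c * (- (1 + ?b)/2)"
    using c by (auto simp: eta_rep_def expH_def)
  have "c = 1" using 1 3 by (simp add: field_simps)
  then show "w = boost i0 iL s v" using 2 by simp
qed

definition Dh :: "'n::finite \<Rightarrow> 'n \<Rightarrow> real^'n \<Rightarrow> real^'n" where
  "Dh i0 iL v = v$iL *\<^sub>R axis i0 1 + v$i0 *\<^sub>R axis iL 1"

lemma boost_deriv:
  fixes i0 iL :: "'n::finite"
  assumes "i0 \<noteq> iL"
  shows "((\<lambda>s. boost i0 iL s v) has_vector_derivative Dh i0 iL v) (at 0)"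
proof -
  have "((\<lambda>s. bst i0 iL s v) has_vector_derivative Dh i0 iL v) (at 0)"
    unfolding bst_def Dh_def
    by (rule derivative_eq_intros | simp)+
  then show ?thesis using boost_eq[OF assms] by simp
qed

lemma Dh_nth:
  fixes i0 iL :: "'n::finite"
  assumes "i0 \<noteq> iL"
  shows "Dh i0 iL v $ j = (if j = i0 then v$iL else if j = iL then v$i0 else 0)"
  using assms by (auto simp: Dh_def axis_def)

lemma sum_others_zero:
  fixes i0 iL :: "'n::finite" and v w :: "real^'n"
  assumes "\<And>j. j \<noteq> i0 \<Longrightarrow> j \<noteq> iL \<Longrightarrow> v$j = 0"
  shows "(\<Sum>j\<in>UNIV-{i0,iL}. v$j * w$j) = 0" "(\<Sum>j\<in>UNIV-{i0,iL}. w$j * v$j) = 0"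
  by (intro sum.neutral ballI; simp add: assms)+

lemma posAdS_char:
  fixes i0 iL :: "'n::finite"
  assumes "i0 \<noteq> iL"
  shows "posAdS i0 iL = {x \<in> AdS i0. (snd x$i0)^2 < (snd x$iL)^2 \<and> fst x * snd x$iL > 0}"
proof -
  have key: "x \<in> posAdS i0 iL \<longleftrightarrow> (snd x$i0)^2 < (snd x$iL)^2 \<and> fst x * snd x$iL > 0"
    if x: "x \<in> AdS i0" for x
  proof -
    obtain t v where xe: "x = (t, v)" by (cases x)
    have fl: "(\<lambda>s. flowAdS i0 iL s x) = (\<lambda>s. (t, boost i0 iL s v))"
      using flowAdS_eq[OF assms x] xe by auto
    have d: "((\<lambda>s. flowAdS i0 iL s x) has_vector_derivative (0, Dh i0 iL v)) (at 0)"
      unfolding fl by (intro has_vector_derivative_Pair boost_deriv[OF assms] derivative_intros)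
    have "x \<in> posAdS i0 iL \<longleftrightarrow> (0, Dh i0 iL v) \<in> ads_cone_int i0 x"
      unfolding posAdS_def using x d vector_derivative_unique_at[OF d] by blast
    moreover have "bA i0 x (0, Dh i0 iL v) = 0" "bA i0 (0, Dh i0 iL v) (0, Dh i0 iL v) = (v$iL)^2 - (v$i0)^2"
      "bA i0 (0, Dh i0 iL v) (Jvec i0 x) = v$iL * t"
      unfolding bA_def Jvec_def xe using assms
      by (simp_all add: mbeta_split[OF assms] Dh_nth[OF assms] sum_others_zero power2_eq_square)
    ultimately show ?thesis unfolding ads_cone_int_def tanAdS_def xe by (auto simp: algebra_simps)
  qed
  show ?thesis using key by (auto simp: posAdS_def)
qed

lemma posV_char:
  fixes i0 iL :: "'n::finite"
  assumes "i0 \<noteq> iL"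
  shows "posV i0 iL = {v. v$iL > \<bar>v$i0\<bar>}"
proof -
  have "v \<in> posV i0 iL \<longleftrightarrow> v$iL > \<bar>v$i0\<bar>" for v
  proof -
    have d: "((\<lambda>s. flowV i0 iL s v) has_vector_derivative Dh i0 iL v) (at 0)"
      using boost_deriv[OF assms] flowV_eq[OF assms] by simp
    have "v \<in> posV i0 iL \<longleftrightarrow> Dh i0 iL v \<in> Vplus i0"
      unfolding posV_def using d vector_derivative_unique_at[OF d] by blast
    moreover have "UNIV - {i0} = insert iL (UNIV - {i0,iL})" using assms by auto
    moreover have "(\<Sum>j\<in>UNIV - {i0,iL}. (Dh i0 iL v $ j)^2) = 0"
      by (auto simp: Dh_nth[OF assms] intro!: sum.neutral)
    ultimately show ?thesis using assms by (simp add: Vplus_def Dh_nth[OF assms] sum.insert)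
  qed
  then show ?thesis by auto
qed




lemma eta_rep_nz: "eta_rep i0 v \<noteq> 0"
  by (auto simp: eta_rep_def zero_prod_def)

lemma ads_emb_nz: "ads_emb x \<noteq> 0"
  by (auto simp: ads_emb_def zero_prod_def)

lemma mbeta_scale: "mbeta i0 (c *\<^sub>R u) (c *\<^sub>R u) = c^2 * mbeta i0 u u"
  by (simp add: mbeta_scale1 mbeta_scale2 power2_eq_square)

lemma sq_less_imp: "(a::real)^2 < b^2 \<Longrightarrow> 0 \<le> b \<Longrightarrow> \<bar>a\<bar> < b"
  by (rule power_less_imp_less_base[of _ 2]) auto

lemma less_imp_sq: "\<bar>a::real\<bar> < b \<Longrightarrow> a^2 < b^2"
  using power_strict_mono[of "\<bar>a\<bar>" b 2] by simp

lemma aux_b: "(b::real) \<noteq> -1 \<Longrightarrow> ((1 - b) / (2 * ((1 + b) / 2)))^2 + b / ((1 + b) / 2)^2 = 1"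
proof -
  assume "b \<noteq> -1" then have h: "1 + b \<noteq> 0" by linarith
  have 0: "2 * ((1 + b) / 2) = 1 + b" by simp
  have 1: "(1 - b) / (2 * ((1 + b) / 2)) = (1-b)/(1+b)" unfolding 0 ..
  have 2: "b / ((1+b)/2)^2 = (4*b)/(1+b)^2" by (simp add: power_divide)
  have "((1 - b) / (2 * ((1 + b) / 2)))^2 + b / ((1 + b) / 2)^2 = ((1 - b)^2 + 4 * b) / (1 + b)^2"
    unfolding 1 2 by (simp add: power_divide add_divide_distrib)
  also have "(1 - b)^2 + 4 * b = (1 + b)^2" by (simp add: power2_eq_square algebra_simps)
  finally show ?thesis using h by simp
qed

lemma partA1:
  fixes i0 iL :: "'n::finite"
  assumes "i0 \<noteq> iL" "x \<in> posAdS i0 iL"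
  shows "\<exists>v. proj_eq (eta_rep i0 v) (ads_emb x)"
proof -
  obtain t u where xe: "x = (t, u)" by (cases x)
  have A: "t^2 + mbeta i0 u u = 1" and p: "(u$i0)^2 < (u$iL)^2" "t * u$iL > 0"
    using assms(2) unfolding posAdS_char[OF assms(1)] xe AdS_def by auto
  have "mbeta i0 u u < 0" using mbeta_le[OF assms(1), of u] p by linarith
  then have "t \<noteq> -1" using A by auto
  then have tp: "t + 1 \<noteq> 0" by linarith
  define c where "c = 1 / (t + 1)"
  have c0: "c \<noteq> 0" using tp by (simp add: c_def)
  have b: "mbeta i0 (c *\<^sub>R u) (c *\<^sub>R u) = c^2 * (1 - t^2)"
    using A by (simp add: mbeta_scale)
  have tp': "1 + t \<noteq> 0" using tp by linarith
  have cc: "c^2 * (1 - t^2) = (1 - t) / (1 + t)"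
  proof -
    have "c^2 * (1 - t^2) = ((1 - t) * (1 + t)) / ((1 + t) * (1 + t))"
      by (simp add: c_def power2_eq_square algebra_simps)
    also have "\<dots> = (1 - t) / (1 + t)" using tp' by simp
    finally show ?thesis .
  qed
  have e1: "(1 - c^2 * (1 - t^2)) / 2 = c * t" unfolding cc using tp
    by (simp add: c_def field_simps)
  have e2: "- (1 + c^2 * (1 - t^2)) / 2 = c * (-1)" unfolding cc using tp
    by (simp add: c_def field_simps)
  have "eta_rep i0 (c *\<^sub>R u) = c *\<^sub>R ads_emb x"
    unfolding eta_rep_def b e1 e2 by (simp add: xe ads_emb_def)
  then show ?thesis using c0 eta_rep_nz ads_emb_nz unfolding proj_eq_def by blast
qed

lemma partA2:
  fixes i0 iL :: "'n::finite"
  assumes "i0 \<noteq> iL"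
  shows "{v. \<exists>x\<in>posAdS i0 iL. proj_eq (eta_rep i0 v) (ads_emb x)} = posV i0 iL - {v. mbeta i0 v v = -1}"
proof (intro equalityI subsetI)
  fix v assume "v \<in> {v. \<exists>x\<in>posAdS i0 iL. proj_eq (eta_rep i0 v) (ads_emb x)}"
  then obtain t u c where x: "(t,u) \<in> posAdS i0 iL" and c0: "c \<noteq> 0"
    and e: "eta_rep i0 v = c *\<^sub>R ads_emb (t,u)" by (auto simp: proj_eq_def)
  let ?b = "mbeta i0 v v"
  have p: "(u$i0)^2 < (u$iL)^2" "t * u$iL > 0"
    using x unfolding posAdS_char[OF assms] by auto
  have e1: "(1 - ?b)/2 = c * t" and e2: "v = c *\<^sub>R u" and e3: "- (1 + ?b)/2 = - c"
    using e by (auto simp: eta_rep_def ads_emb_def)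
  have vv: "v$i0 = c * u$i0" "v$iL = c * u$iL" using e2 by auto
  have "?b \<le> (v$i0)^2 - (v$iL)^2" by (rule mbeta_le[OF assms])
  also have "\<dots> = c^2 * ((u$i0)^2 - (u$iL)^2)" by (simp add: vv power_mult_distrib algebra_simps)
  also have "\<dots> < 0" using p c0 by (simp add: mult_pos_neg)
  finally have bn: "?b < 0" .
  have "c * t = (1 - ?b)/2" using e1 by simp
  then have ct: "c * t > 0" using bn by simp
  have "(c * t) * (t * u$iL) > 0" using ct p by simp
  then have "(c * u$iL) * (t * t) > 0" by (simp add: algebra_simps)
  moreover have "t * t \<ge> 0" by simp
  ultimately have cu: "c * u$iL > 0" by (auto simp: zero_less_mult_iff)
  have "(v$i0)^2 < (v$iL)^2" using p c0 by (simp add: vv power_mult_distrib)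
  then have "v$iL > \<bar>v$i0\<bar>" using cu vv
    by (intro sq_less_imp) auto
  moreover have "?b \<noteq> -1" using e3 c0 by auto
  ultimately show "v \<in> posV i0 iL - {v. mbeta i0 v v = -1}" by (simp add: posV_char[OF assms])
next
  fix v assume v: "v \<in> posV i0 iL - {v. mbeta i0 v v = -1}"
  let ?b = "mbeta i0 v v"
  have vp: "v$iL > \<bar>v$i0\<bar>" "?b \<noteq> -1" using v by (auto simp: posV_char[OF assms])
  have "?b \<le> (v$i0)^2 - (v$iL)^2" by (rule mbeta_le[OF assms])
  moreover have "(v$i0)^2 < (v$iL)^2" using vp
    by (intro less_imp_sq) auto
  ultimately have bn: "?b < 0" by linarith
  define c where "c = (1 + ?b) / 2"
  have c0: "c \<noteq> 0" using vp by (simp add: c_def)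
  define u where "u = (1/c) *\<^sub>R v"
  define t where "t = (1 - ?b) / (2 * c)"
  have bu: "mbeta i0 u u = ?b / c^2" unfolding u_def mbeta_scale by (simp add: power_divide)
  have "t^2 + mbeta i0 u u = 1" unfolding bu t_def c_def using vp(2)
    by (rule aux_b)
  moreover have "(u$i0)^2 < (u$iL)^2" using \<open>(v$i0)^2 < (v$iL)^2\<close> c0
    by (simp add: u_def power_mult_distrib power_divide divide_strict_right_mono)
  moreover have "t * u$iL > 0"
  proof -
    have "t * u$iL = ((1 - ?b) * v$iL) / (2 * c^2)" using c0
      by (simp add: t_def u_def power2_eq_square field_simps)
    moreover have "(1 - ?b) * v$iL > 0" using bn vp by (intro mult_pos_pos) auto
    ultimately show ?thesis using c0 by simp
  qed
  ultimately have x: "(t, u) \<in> posAdS i0 iL" by (simp add: posAdS_char[OF assms] AdS_def)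
  have "eta_rep i0 v = c *\<^sub>R ads_emb (t,u)" using c0
    by (simp add: eta_rep_def ads_emb_def t_def u_def c_def field_simps)
  then show "v \<in> {v. \<exists>x\<in>posAdS i0 iL. proj_eq (eta_rep i0 v) (ads_emb x)}"
    using x c0 eta_rep_nz ads_emb_nz unfolding proj_eq_def by blast
qed




definition Cp :: "'n::finite \<Rightarrow> 'n \<Rightarrow> (real \<times> (real^'n)) set" where
  "Cp i0 iL = {x \<in> posAdS i0 iL. fst x > 0}"
definition Cm :: "'n::finite \<Rightarrow> 'n \<Rightarrow> (real \<times> (real^'n)) set" where
  "Cm i0 iL = {x \<in> posAdS i0 iL. fst x < 0}"

lemma posAdS_neg:
  fixes i0 iL :: "'n::finite"
  assumes "i0 \<noteq> iL" "x \<in> posAdS i0 iL"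
  shows "- x \<in> posAdS i0 iL"
proof -
  have "mbeta i0 (- snd x) (- snd x) = mbeta i0 (snd x) (snd x)"
    using mbeta_scale[of i0 "-1" "snd x"] by simp
  then show ?thesis using assms(2) unfolding posAdS_char[OF assms(1)] AdS_def
    by (auto simp: case_prod_beta)
qed

lemma Cm_eq:
  fixes i0 iL :: "'n::finite"
  assumes "i0 \<noteq> iL"
  shows "Cm i0 iL = uminus ` Cp i0 iL"
proof (intro equalityI subsetI)
  fix x assume "x \<in> Cm i0 iL"
  then have "- x \<in> Cp i0 iL" using posAdS_neg[OF assms] by (auto simp: Cm_def Cp_def)
  then show "x \<in> uminus ` Cp i0 iL" by (metis image_eqI minus_minus)
next
  fix x assume "x \<in> uminus ` Cp i0 iL"
  then show "x \<in> Cm i0 iL" using posAdS_neg[OF assms] by (auto simp: Cm_def Cp_def)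
qed

lemma Cp_eq:
  fixes i0 iL :: "'n::finite"
  assumes "i0 \<noteq> iL"
  shows "Cp i0 iL = (\<lambda>v. (sqrt (1 - mbeta i0 v v), v)) ` {v. v$iL > \<bar>v$i0\<bar>}"
proof (intro equalityI subsetI)
  fix x assume "x \<in> Cp i0 iL"
  then obtain t v where xe: "x = (t, v)" and A: "t^2 + mbeta i0 v v = 1"
    and p: "(v$i0)^2 < (v$iL)^2" "t * v$iL > 0" "t > 0"
    unfolding Cp_def posAdS_char[OF assms] AdS_def by auto
  have "t = sqrt (1 - mbeta i0 v v)" using A p(3)
    by (metis add_diff_cancel_right' less_eq_real_def real_sqrt_abs abs_of_pos add.commute)
  moreover have "v$iL > 0" using p by (simp add: zero_less_mult_iff)
  then have "v$iL > \<bar>v$i0\<bar>" using p by (intro sq_less_imp) auto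
  ultimately show "x \<in> (\<lambda>v. (sqrt (1 - mbeta i0 v v), v)) ` {v. v$iL > \<bar>v$i0\<bar>}"
    using xe by auto
next
  fix x assume "x \<in> (\<lambda>v. (sqrt (1 - mbeta i0 v v), v)) ` {v. v$iL > \<bar>v$i0\<bar>}"
  then obtain v where xe: "x = (sqrt (1 - mbeta i0 v v), v)" and v: "v$iL > \<bar>v$i0\<bar>" by auto
  have sq: "(v$i0)^2 < (v$iL)^2" using v by (intro less_imp_sq) auto
  then have bn: "mbeta i0 v v < 0" using mbeta_le[OF assms, of v] by linarith
  then have tp: "sqrt (1 - mbeta i0 v v) > 0" by simp
  have "(sqrt (1 - mbeta i0 v v))^2 + mbeta i0 v v = 1" using bn by simp
  moreover have "sqrt (1 - mbeta i0 v v) * v$iL > 0" using tp v by simp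
  ultimately show "x \<in> Cp i0 iL" unfolding Cp_def posAdS_char[OF assms] AdS_def
    using xe tp sq by auto
qed

lemma W_convex:
  fixes i0 iL :: "'n::finite"
  shows "convex {v::real^'n. v$iL > \<bar>v$i0\<bar>}"
proof -
  have "{v::real^'n. v$iL > \<bar>v$i0\<bar>} = {v. inner (axis iL 1 - axis i0 1) v > 0} \<inter> {v. inner (axis iL 1 + axis i0 1) v > 0}"
    by (auto simp: inner_diff_left inner_add_left inner_axis')
  then show ?thesis by (simp add: convex_Int convex_halfspace_gt)
qed

lemma mbeta_cont: "continuous_on S (\<lambda>v. mbeta i0 v v)"
  unfolding mbeta_def by (intro continuous_intros)

lemma Cp_connected:
  fixes i0 iL :: "'n::finite"
  assumes "i0 \<noteq> iL"
  shows "connected (Cp i0 iL)" "Cp i0 iL \<noteq> {}"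
proof -
  show "connected (Cp i0 iL)" unfolding Cp_eq[OF assms]
    by (intro connected_continuous_image convex_connected W_convex continuous_intros mbeta_cont)
  have "axis iL 1 \<in> {v::real^'n. v$iL > \<bar>v$i0\<bar>}" using assms by (simp add: axis_def)
  then show "Cp i0 iL \<noteq> {}" unfolding Cp_eq[OF assms] by blast
qed

lemma Cm_connected:
  fixes i0 iL :: "'n::finite"
  assumes "i0 \<noteq> iL"
  shows "connected (Cm i0 iL)" "Cm i0 iL \<noteq> {}"
  unfolding Cm_eq[OF assms] using Cp_connected[OF assms]
  by (auto intro!: connected_continuous_image continuous_intros)

lemma conn_split:
  fixes i0 iL :: "'n::finite"
  assumes "i0 \<noteq> iL" "connected D" "D \<subseteq> posAdS i0 iL"
  shows "D \<subseteq> Cp i0 iL \<or> D \<subseteq> Cm i0 iL"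
proof -
  have o1: "open {x::real \<times> (real^'n). 0 < fst x}" and o2: "open {x::real \<times> (real^'n). fst x < 0}"
    by (intro open_Collect_less continuous_intros)+
  have Dsub: "D \<subseteq> {x. 0 < fst x} \<union> {x. fst x < 0}"
    using assms(3) by (auto simp: posAdS_char[OF assms(1)] zero_less_mult_iff)
  then have "{x. 0 < fst x} \<inter> D = {} \<or> {x. fst x < 0} \<inter> D = {}"
    using connectedD[OF assms(2) o1 o2] by fastforce
  then show ?thesis using assms(3) Dsub unfolding Cp_def Cm_def by blast
qed

lemma components_posAdS:
  fixes i0 iL :: "'n::finite"
  assumes "i0 \<noteq> iL"
  shows "components (posAdS i0 iL) = {Cp i0 iL, Cm i0 iL}"
proof -
  have sub: "Cp i0 iL \<subseteq> posAdS i0 iL" "Cm i0 iL \<subseteq> posAdS i0 iL" by (auto simp: Cp_def Cm_def)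
  have disj: "Cp i0 iL \<inter> Cm i0 iL = {}" by (auto simp: Cp_def Cm_def)
  have max: "D = C" if "C \<in> {Cp i0 iL, Cm i0 iL}" "D \<noteq> {}" "C \<subseteq> D" "D \<subseteq> posAdS i0 iL" "connected D" for C D
    using conn_split[OF assms that(5,4)] that(1,3) disj Cp_connected(2)[OF assms] Cm_connected(2)[OF assms]
    by blast
  have in1: "C \<in> components (posAdS i0 iL)" if "C \<in> {Cp i0 iL, Cm i0 iL}" for C
    unfolding in_components_maximal
    using that max[OF that] sub Cp_connected[OF assms] Cm_connected[OF assms] by blast
  have in2: "C \<in> {Cp i0 iL, Cm i0 iL}" if "C \<in> components (posAdS i0 iL)" for C
  proof -
    have C: "C \<noteq> {}" "C \<subseteq> posAdS i0 iL" "connected C"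
      and m: "\<And>D. D \<noteq> {} \<Longrightarrow> C \<subseteq> D \<Longrightarrow> D \<subseteq> posAdS i0 iL \<Longrightarrow> connected D \<Longrightarrow> D = C"
      using that unfolding in_components_maximal by blast+
    show ?thesis
      using conn_split[OF assms C(3,2)] m[of "Cp i0 iL"] m[of "Cm i0 iL"] sub
        Cp_connected[OF assms] Cm_connected[OF assms] by blast
  qed
  show ?thesis using in1 in2 by blast
qed

lemma card_components:
  fixes i0 iL :: "'n::finite"
  assumes "i0 \<noteq> iL"
  shows "card (components (posAdS i0 iL)) = 2"
proof -
  have "Cp i0 iL \<noteq> Cm i0 iL"
    using Cp_connected(2)[OF assms] by (auto simp: Cp_def Cm_def)
  then show ?thesis unfolding components_posAdS[OF assms] by simp
qed




lemma mbeta2: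
  fixes i0 iL :: "'n::finite"
  assumes "i0 \<noteq> iL"
  shows "mbeta i0 (a *\<^sub>R axis i0 1 + b *\<^sub>R axis iL 1) (c *\<^sub>R axis i0 1 + d *\<^sub>R axis iL 1) = a*c - b*d"
proof -
  have "(\<Sum>j\<in>UNIV-{i0,iL}. (a *\<^sub>R axis i0 1 + b *\<^sub>R axis iL 1)$j * (c *\<^sub>R axis i0 1 + d *\<^sub>R axis iL 1 :: real^'n)$j) = 0"
    by (intro sum.neutral) (auto simp: axis_def)
  then show ?thesis unfolding mbeta_split[OF assms] using assms by (simp add: axis_def)
qed

definition dl :: "real \<Rightarrow> real \<Rightarrow> real" where "dl l t = 1/10 - l * t * (1 - t)"

definition gam :: "'n::finite \<Rightarrow> 'n \<Rightarrow> real \<Rightarrow> real \<Rightarrow> real \<times> (real^'n)" where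
  "gam i0 iL l t = (cos (t - 1/2) / sin (dl l t),
     (sin (t - 1/2) / sin (dl l t)) *\<^sub>R axis i0 1 + (cos (dl l t) / sin (dl l t)) *\<^sub>R axis iL 1)"

definition gamd :: "'n::finite \<Rightarrow> 'n \<Rightarrow> real \<Rightarrow> real \<Rightarrow> real \<times> (real^'n)" where
  "gamd i0 iL l t = (let st = sin (t - 1/2); ct = cos (t - 1/2); sd = sin (dl l t); cd = cos (dl l t);
        d' = l * (2 * t - 1) in
     ((- st * sd - ct * cd * d') / sd^2,
      ((ct * sd - st * cd * d') / sd^2) *\<^sub>R axis i0 1 + (- d' / sd^2) *\<^sub>R axis iL 1))"

lemma cos_sq: "cos (x::real) * cos x = 1 - sin x * sin x"
  using sin_cos_squared_add[of x] by (simp add: power2_eq_square algebra_simps)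

lemma vd_scale: "((f::real\<Rightarrow>real) has_real_derivative f') (at t) \<Longrightarrow> ((\<lambda>x. f x *\<^sub>R c) has_vector_derivative f' *\<^sub>R c) (at t)"
  using has_vector_derivative_scaleR[of f f' t UNIV "\<lambda>_. c" 0] by (simp add: has_vector_derivative_const)

lemma gam_deriv:
  assumes "sin (dl l t) \<noteq> 0"
  shows "(gam i0 iL l has_vector_derivative gamd i0 iL l t) (at t)"
proof -
  have dd: "(dl l has_real_derivative l * (2 * t - 1)) (at t)"
    unfolding dl_def[abs_def] by (auto intro!: derivative_eq_intros simp: algebra_simps)
  have dA: "((\<lambda>x. cos (x - 1/2) / sin (dl l x)) has_real_derivative
     (- sin (t - 1/2) * sin (dl l t) - cos (t - 1/2) * cos (dl l t) * (l * (2 * t - 1))) / (sin (dl l t))^2) (at t)"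
    apply (rule derivative_eq_intros dd refl | simp add: assms power2_eq_square algebra_simps)+
    done
  have dB: "((\<lambda>x. sin (x - 1/2) / sin (dl l x)) has_real_derivative
     (cos (t - 1/2) * sin (dl l t) - sin (t - 1/2) * cos (dl l t) * (l * (2 * t - 1))) / (sin (dl l t))^2) (at t)"
    apply (rule derivative_eq_intros dd refl | simp add: assms power2_eq_square algebra_simps)+
    done
  have dC: "((\<lambda>x. cos (dl l x) / sin (dl l x)) has_real_derivative
     (- (l * (2 * t - 1)) / (sin (dl l t))^2)) (at t)"
    apply (rule derivative_eq_intros dd refl | simp add: assms)+
    using assms
    apply (simp add: field_simps power2_eq_square cos_sq)
    done
  show ?thesis unfolding gam_def[abs_def] gamd_def Let_def
    by (intro has_vector_derivative_Pair has_vector_derivative_add dA[unfolded has_real_derivative_iff_has_vector_derivative]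
      vd_scale[OF dB] vd_scale[OF dC])
qed

lemma alg:
  fixes st ct sd cd d' :: real
  assumes h1: "ct * ct = 1 - st * st" and h2: "cd * cd = 1 - sd * sd" and sd: "sd \<noteq> 0"
  shows "(ct / sd) * ((- st * sd - ct * cd * d') / sd^2) + (st / sd) * ((ct * sd - st * cd * d') / sd^2)
          - (cd / sd) * (- d' / sd^2) = 0"
    "((- st * sd - ct * cd * d') / sd^2)^2 + ((ct * sd - st * cd * d') / sd^2)^2 - (- d' / sd^2)^2
       = (1 - d'^2) / sd^2"
    "((- st * sd - ct * cd * d') / sd^2) * (- (st / sd)) + ((ct * sd - st * cd * d') / sd^2) * (ct / sd)
       = 1 / sd^2"
proof -
  have p1: "ct * (- st * sd - ct * cd * d') + st * (ct * sd - st * cd * d') - cd * (- d') = 0"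
    using h1 by algebra
  have "(ct / sd) * ((- st * sd - ct * cd * d') / sd^2) + (st / sd) * ((ct * sd - st * cd * d') / sd^2)
          - (cd / sd) * (- d' / sd^2) = (ct * (- st * sd - ct * cd * d') + st * (ct * sd - st * cd * d') - cd * (- d')) / sd^3"
    using sd by (simp add: power2_eq_square power3_eq_cube field_simps)
  then show "(ct / sd) * ((- st * sd - ct * cd * d') / sd^2) + (st / sd) * ((ct * sd - st * cd * d') / sd^2)
          - (cd / sd) * (- d' / sd^2) = 0" using p1 by simp
  have gen: "(a/q)^2 + (b/q)^2 - (c/q)^2 = (a^2+b^2-c^2)/q^2" for a b c q :: real
    by (simp add: power_divide diff_divide_distrib add_divide_distrib)
  have p2: "(- st * sd - ct * cd * d')^2 + (ct * sd - st * cd * d')^2 - (- d')^2 = sd^2 * (1 - d'^2)"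
    using h1 h2 by algebra
  have "((- st * sd - ct * cd * d') / sd^2)^2 + ((ct * sd - st * cd * d') / sd^2)^2 - (- d' / sd^2)^2
     = ((- st * sd - ct * cd * d')^2 + (ct * sd - st * cd * d')^2 - (- d')^2) / (sd^2)^2"
    by (rule gen)
  also have "\<dots> = (1 - d'^2) / sd^2" unfolding p2 using sd by (simp add: power2_eq_square)
  finally show "((- st * sd - ct * cd * d') / sd^2)^2 + ((ct * sd - st * cd * d') / sd^2)^2 - (- d' / sd^2)^2
       = (1 - d'^2) / sd^2" .
  have gen2: "(a/q) * (- (x/r)) + (b/q) * (y/r) = (a * (- x) + b * y)/(q * r)" for a b x y q r :: real
    by (simp add: times_divide_times_eq add_divide_distrib diff_divide_distrib)
  have p3: "(- st * sd - ct * cd * d') * (- st) + (ct * sd - st * cd * d') * ct = sd"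
    using h1 by algebra
  have "((- st * sd - ct * cd * d') / sd^2) * (- (st / sd)) + ((ct * sd - st * cd * d') / sd^2) * (ct / sd)
     = ((- st * sd - ct * cd * d') * (- st) + (ct * sd - st * cd * d') * ct) / (sd^2 * sd)"
    by (rule gen2)
  also have "\<dots> = 1 / sd^2" unfolding p3 using sd by (simp add: power2_eq_square)
  finally show "((- st * sd - ct * cd * d') / sd^2) * (- (st / sd)) + ((ct * sd - st * cd * d') / sd^2) * (ct / sd)
       = 1 / sd^2" .
qed

lemma dl_bounds:
  assumes "0 \<le> l" "l < 2/5" "0 \<le> t" "t \<le> 1"
  shows "0 < dl l t" "dl l t \<le> 1/10"
proof -
  have a: "0 \<le> t * (1 - t)" using assms by simp
  have "0 \<le> (2*t - 1)^2" by simp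
  then have b: "t * (1 - t) \<le> 1/4" by (simp add: power2_eq_square algebra_simps)
  have "l * (t * (1 - t)) \<le> l * (1/4)" using b assms by (intro mult_left_mono) auto
  moreover have "0 \<le> l * (t * (1 - t))" using a assms by simp
  moreover have "dl l t = 1/10 - l * (t * (1 - t))" by (simp add: dl_def mult.assoc)
  ultimately show "0 < dl l t" "dl l t \<le> 1/10" using assms by linarith+
qed

lemma trig_bounds:
  assumes "0 \<le> l" "l < 2/5" "0 \<le> t" "t \<le> 1"
  shows "sin (dl l t) > 0" "cos (dl l t) > 0" "cos (t - 1/2) > 0" "(sin (t - 1/2))^2 < (cos (dl l t))^2"
proof -
  note d = dl_bounds[OF assms]
  have pi2: "2 \<le> pi" by (rule pi_ge_two)
  show s: "sin (dl l t) > 0" using d pi2 by (intro sin_gt_zero) auto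
  show "cos (dl l t) > 0" using d pi2 by (intro cos_gt_zero) auto
  show "cos (t - 1/2) > 0" using assms pi2 by (intro cos_gt_zero_pi) auto
  have "sin (dl l t) \<le> dl l t" using d by (intro sin_x_le_x) auto
  then have "(sin (dl l t))^2 \<le> (1/10)^2" using s d by (intro power_mono) auto
  moreover have "(1/10::real)^2 = 1/100" by (simp add: power2_eq_square)
  moreover have "(sin (dl l t))^2 + (cos (dl l t))^2 = 1" by simp
  ultimately have c: "(cos (dl l t))^2 \<ge> 99/100" by linarith
  have "\<bar>sin (t - 1/2)\<bar> \<le> \<bar>t - 1/2\<bar>" by (rule abs_sin_x_le_abs_x)
  also have "\<dots> \<le> 1/2" using assms by (simp add: abs_if)
  finally have "(sin (t - 1/2))^2 \<le> (1/2)^2"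
    by (metis abs_ge_zero power2_abs power_mono)
  moreover have "(1/2::real)^2 = 1/4" by (simp add: power2_eq_square)
  ultimately show "(sin (t - 1/2))^2 < (cos (dl l t))^2" using c by linarith
qed

lemma Jvec_eq:
  fixes i0 iL :: "'n::finite"
  assumes "i0 \<noteq> iL"
  shows "Jvec i0 (a, b *\<^sub>R axis i0 1 + c *\<^sub>R axis iL 1) = (- b, a *\<^sub>R axis i0 1 + 0 *\<^sub>R axis iL (1::real))"
  using assms by (auto simp: Jvec_def vec_eq_iff axis_def)

lemma gam_nth:
  fixes i0 iL :: "'n::finite"
  assumes "i0 \<noteq> iL"
  shows "(b *\<^sub>R axis i0 1 + c *\<^sub>R axis iL 1 :: real^'n) $ i0 = b"
        "(b *\<^sub>R axis i0 1 + c *\<^sub>R axis iL 1 :: real^'n) $ iL = c"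
  using assms by (auto simp: axis_def)

lemma gam_in:
  fixes i0 iL :: "'n::finite"
  assumes "i0 \<noteq> iL" "0 \<le> l" "l < 2/5" "0 \<le> t" "t \<le> 1"
  shows "gam i0 iL l t \<in> Cp i0 iL"
proof -
  note tb = trig_bounds[OF assms(2-5)]
  define st where "st = sin (t - 1/2)"
  define ct where "ct = cos (t - 1/2)"
  define sd where "sd = sin (dl l t)"
  define cd where "cd = cos (dl l t)"
  have h1: "st^2 + ct^2 = 1" and h2: "sd^2 + cd^2 = 1" unfolding st_def ct_def sd_def cd_def by simp_all
  have sd: "sd > 0" "cd > 0" "ct > 0" "st^2 < cd^2" using tb unfolding st_def ct_def sd_def cd_def by auto
  have g: "gam i0 iL l t = (ct / sd, (st / sd) *\<^sub>R axis i0 1 + (cd / sd) *\<^sub>R axis iL 1)"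
    unfolding gam_def st_def ct_def sd_def cd_def ..
  have "(ct / sd)^2 + ((st / sd) * (st / sd) - (cd / sd) * (cd / sd)) = (ct^2 + st^2 - cd^2) / sd^2"
    by (simp add: power2_eq_square add_divide_distrib diff_divide_distrib)
  also have "\<dots> = 1" using h1 h2 sd by (simp add: field_simps)
  finally have A: "(ct / sd)^2 + ((st / sd) * (st / sd) - (cd / sd) * (cd / sd)) = 1" .
  have B: "(st / sd)^2 < (cd / sd)^2" using sd by (simp add: power_divide divide_strict_right_mono)
  have C: "ct / sd * (cd / sd) > 0" using sd by simp
  show ?thesis unfolding Cp_def posAdS_char[OF assms(1)] AdS_def g
    using A B C sd assms(1) by (simp add: mbeta2[OF assms(1)]) (simp add: axis_def)
qed

lemma gamd_cone:
  fixes i0 iL :: "'n::finite"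
  assumes "i0 \<noteq> iL" "0 \<le> l" "l < 2/5" "0 \<le> t" "t \<le> 1"
  shows "gamd i0 iL l t \<in> ads_cone i0 (gam i0 iL l t)"
proof -
  note tb = trig_bounds[OF assms(2-5)]
  define st where "st = sin (t - 1/2)"
  define ct where "ct = cos (t - 1/2)"
  define sd where "sd = sin (dl l t)"
  define cd where "cd = cos (dl l t)"
  define d' where "d' = l * (2 * t - 1)"
  have h1: "ct * ct = 1 - st * st" and h2: "cd * cd = 1 - sd * sd" unfolding st_def ct_def sd_def cd_def
    by (simp_all add: cos_sq)
  have sd: "sd > 0" using tb unfolding sd_def by auto
  have g: "gam i0 iL l t = (ct / sd, (st / sd) *\<^sub>R axis i0 1 + (cd / sd) *\<^sub>R axis iL 1)"
    unfolding gam_def st_def ct_def sd_def cd_def ..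
  have gd: "gamd i0 iL l t = ((- st * sd - ct * cd * d') / sd^2,
      ((ct * sd - st * cd * d') / sd^2) *\<^sub>R axis i0 1 + (- d' / sd^2) *\<^sub>R axis iL 1)"
    unfolding gamd_def st_def ct_def sd_def cd_def d'_def Let_def ..
  note a = alg[OF h1 h2 sd[THEN less_imp_neq, symmetric], of d']
  have "\<bar>2 * t - 1\<bar> \<le> 1" using assms by (simp add: abs_if)
  then have "l * \<bar>2 * t - 1\<bar> \<le> l * 1" using assms by (intro mult_left_mono) auto
  moreover have "\<bar>d'\<bar> = l * \<bar>2 * t - 1\<bar>" using assms by (simp add: d'_def abs_mult)
  ultimately have "\<bar>d'\<bar> \<le> 1" using assms by linarith
  then have "\<bar>d'\<bar>^2 \<le> 1^2" by (intro power_mono) auto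
  then have "d'^2 \<le> 1" by simp
  then have q: "0 \<le> (1 - d'^2) / sd^2" by simp
  let ?A = "ct / sd" let ?B = "st / sd" let ?C = "cd / sd"
  let ?A' = "(- st * sd - ct * cd * d') / sd^2" let ?B' = "(ct * sd - st * cd * d') / sd^2"
  let ?C' = "- d' / sd^2"
  have e1: "bA i0 (gam i0 iL l t) (gamd i0 iL l t) = ?A * ?A' + (?B * ?B' - ?C * ?C')"
    unfolding g gd bA_def by (simp only: mbeta2[OF assms(1)] fst_conv snd_conv)
  have e2: "bA i0 (gamd i0 iL l t) (gamd i0 iL l t) = ?A' * ?A' + (?B' * ?B' - ?C' * ?C')"
    unfolding gd bA_def by (simp only: mbeta2[OF assms(1)] fst_conv snd_conv)
  have e3: "bA i0 (gamd i0 iL l t) (Jvec i0 (gam i0 iL l t)) = ?A' * (- ?B) + (?B' * ?A - ?C' * 0)"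
    unfolding g gd bA_def Jvec_eq[OF assms(1)] by (simp only: mbeta2[OF assms(1)] fst_conv snd_conv)
  have r1: "?A * ?A' + (?B * ?B' - ?C * ?C') = 0" using a(1) by (simp only: add_diff_eq)
  have r2: "?A' * ?A' + (?B' * ?B' - ?C' * ?C') \<ge> 0" using a(2) q by (simp only: add_diff_eq power2_eq_square)
  have r3: "?A' * (- ?B) + (?B' * ?A - ?C' * 0) \<ge> 0" using a(3) by simp
  show ?thesis unfolding ads_cone_def tanAdS_def using e1 e2 e3 r1 r2 r3 by simp
qed

lemma curve_gen:
  fixes g :: "real \<Rightarrow> real \<times> (real^'n::finite)"
  assumes d: "\<And>t. t \<in> {0..1} \<Longrightarrow> (g has_vector_derivative g' t) (at t)"
    and c: "continuous_on {0..1} g'"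
    and k: "\<And>t. t \<in> {0..1} \<Longrightarrow> g' t \<in> ads_cone i0 (g t)"
    and U: "g ` {0..1} \<subseteq> U" and "g 0 = a" "g 1 = b"
  shows "causal_curve i0 U g a b"
  unfolding causal_curve_def
proof (intro conjI ballI allI impI)
  show "g piecewise_C1_differentiable_on {0..1}"
    using d c unfolding C1_differentiable_on_def
    by (intro C1_differentiable_imp_piecewise) (auto simp: C1_differentiable_on_def intro!: exI[of _ g'])
  fix t w assume t: "t \<in> {0..1}" and w: "(g has_vector_derivative w) (at t within {0..1})"
  have "(g has_vector_derivative g' t) (at t within {0..1})"
    using d[OF t] by (rule has_vector_derivative_at_within)
  then have "w = g' t" using w t
    by (intro vector_derivative_unique_within_closed_interval[of 0 1 t g w "g' t"]) (auto simp: box_real(2))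
  then show "w \<in> ads_cone i0 (g t)" using k[OF t] by simp
qed (use assms in auto)

lemma bA_neg: "bA i0 (- x) y = - bA i0 x y" "bA i0 x (- y) = - bA i0 x y"
  using mbeta_scale1[of i0 "-1"] mbeta_scale2[of i0 _ "-1"] by (auto simp: bA_def)

lemma Jvec_neg: "Jvec i0 (- x) = - Jvec i0 x"
  by (auto simp: Jvec_def vec_eq_iff)

lemma cone_neg: "z \<in> ads_cone i0 x \<Longrightarrow> - z \<in> ads_cone i0 (- x)"
  by (auto simp: ads_cone_def tanAdS_def bA_neg Jvec_neg)

lemma gamd_cont:
  assumes "0 \<le> l" "l < 2/5"
  shows "continuous_on {0..1} (gamd i0 iL l)"
proof -
  have "\<forall>t\<in>{0..1}. sin (dl l t) \<noteq> 0" 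
  proof
    fix t :: real assume "t \<in> {0..1}"
    then have "sin (dl l t) > 0" using trig_bounds(1)[OF assms] by auto
    then show "sin (dl l t) \<noteq> 0" by simp
  qed
  then have "\<forall>t\<in>{0..1}. (sin (dl l t))^2 \<noteq> 0" by simp
  then show ?thesis unfolding gamd_def Let_def dl_def
    by (intro continuous_intros) auto
qed

lemma gam_causal:
  fixes i0 iL :: "'n::finite"
  assumes "i0 \<noteq> iL" "0 \<le> l" "l < 2/5"
  shows "causal_curve i0 (Cp i0 iL) (gam i0 iL l) (gam i0 iL 0 0) (gam i0 iL 0 1)"
    "causal_curve i0 (Cm i0 iL) (\<lambda>t. - gam i0 iL l t) (- gam i0 iL 0 0) (- gam i0 iL 0 1)"
proof -
  have sd: "sin (dl l t) \<noteq> 0" if "t \<in> {0..1}" for t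
  proof -
    have "sin (dl l t) > 0" using that trig_bounds(1)[OF assms(2,3)] by auto
    then show ?thesis by simp
  qed
  have e: "gam i0 iL l 0 = gam i0 iL 0 0" "gam i0 iL l 1 = gam i0 iL 0 1" by (simp_all add: gam_def dl_def)
  show "causal_curve i0 (Cp i0 iL) (gam i0 iL l) (gam i0 iL 0 0) (gam i0 iL 0 1)"
  proof (rule curve_gen[where g'="gamd i0 iL l"])
    show "(gam i0 iL l has_vector_derivative gamd i0 iL l t) (at t)" if "t \<in> {0..1}" for t
      by (rule gam_deriv[OF sd[OF that]])
  qed (use gamd_cont[OF assms(2,3)] gamd_cone[OF assms] gam_in[OF assms] e in auto)
  show "causal_curve i0 (Cm i0 iL) (\<lambda>t. - gam i0 iL l t) (- gam i0 iL 0 0) (- gam i0 iL 0 1)"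
  proof (rule curve_gen[where g'="\<lambda>t. - gamd i0 iL l t"])
    show "((\<lambda>t. - gam i0 iL l t) has_vector_derivative - gamd i0 iL l t) (at t)" if "t \<in> {0..1}" for t
      using gam_deriv[OF sd[OF that]] by (rule has_vector_derivative_minus)
    show "continuous_on {0..1} (\<lambda>t. - gamd i0 iL l t)"
      using gamd_cont[OF assms(2,3)] by (rule continuous_on_minus)
    show "- gamd i0 iL l t \<in> ads_cone i0 (- gam i0 iL l t)" if "t \<in> {0..1}" for t
      using that by (intro cone_neg gamd_cone[OF assms]) auto
    show "(\<lambda>t. - gam i0 iL l t) ` {0..1} \<subseteq> Cm i0 iL"
      using gam_in[OF assms] by (auto simp: Cm_eq[OF assms(1)])
  qed (simp_all add: e)
qed

lemma gam_big:
  fixes i0 iL :: "'n::finite" and M :: real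
  assumes "i0 \<noteq> iL"
  shows "\<exists>l. 0 \<le> l \<and> l < 2/5 \<and> norm (gam i0 iL l (1/2)) > M"
proof -
  define \<delta> where "\<delta> = min (1/10) (1 / (4 * (\<bar>M\<bar> + 1)))"
  define l where "l = 4 * (1/10 - \<delta>)"
  have dp: "0 < \<delta>" "\<delta> \<le> 1/10" "\<delta> \<le> 1 / (4 * (\<bar>M\<bar> + 1))" unfolding \<delta>_def by auto
  have l: "0 \<le> l" "l < 2/5" using dp unfolding l_def by auto
  have dl: "dl l (1/2) = \<delta>" unfolding dl_def l_def by (simp add: field_simps)
  have s: "sin \<delta> > 0" "sin \<delta> \<le> \<delta>" using trig_bounds(1)[OF l, of "1/2"] dp dl by (auto intro: sin_x_le_x)
  have "(sin \<delta>)^2 \<le> (1/10)^2" using s dp by (intro power_mono) auto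
  moreover have "(1/10::real)^2 = 1/100" by (simp add: power2_eq_square)
  moreover have "(sin \<delta>)^2 + (cos \<delta>)^2 = 1" by simp
  ultimately have c2: "(cos \<delta>)^2 \<ge> 99/100" by linarith
  have cp: "cos \<delta> > 0" using trig_bounds(2)[OF l, of "1/2"] dl by simp
  have c: "cos \<delta> \<ge> 1/2"
  proof (rule ccontr)
    assume "\<not> cos \<delta> \<ge> 1/2"
    then have "(cos \<delta>)^2 \<le> (1/2)^2" using cp by (intro power_mono) auto
    then show False using c2 by (simp add: power2_eq_square)
  qed
  have K: "0 < 4*(\<bar>M\<bar>+1)" by simp
  have "\<delta> * (4*(\<bar>M\<bar>+1)) \<le> 1" using dp(3) K by (simp add: le_divide_eq)
  then have "1 / \<delta> \<ge> 4 * (\<bar>M\<bar> + 1)" using dp(1) by (simp add: le_divide_eq mult.commute)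
  have "(1/2) / \<delta> \<le> cos \<delta> / sin \<delta>"
    using c s dp by (intro frac_le) auto
  moreover have "(1/2) / \<delta> = (1/2) * (1 / \<delta>)" by simp
  ultimately have big: "cos \<delta> / sin \<delta> \<ge> 2 * (\<bar>M\<bar> + 1)"
    using \<open>1 / \<delta> \<ge> _\<close> by linarith
  have "\<bar>snd (gam i0 iL l (1/2)) $ iL\<bar> = cos \<delta> / sin \<delta>"
    using assms cp s unfolding gam_def dl by (simp add: axis_def)
  moreover have "\<bar>snd (gam i0 iL l (1/2)) $ iL\<bar> \<le> norm (gam i0 iL l (1/2))"
  proof -
    have "norm (snd p) \<le> norm p" for p :: "real \<times> (real^'n)" using norm_snd_le[of "snd p" "fst p"] by simp
    then show ?thesis using component_le_norm_cart[of "snd (gam i0 iL l (1/2))" iL] by (rule order.trans[rotated])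
  qed
  ultimately have n1: "cos \<delta> / sin \<delta> \<le> norm (gam i0 iL l (1/2))" by simp
  have "M < 2 * (\<bar>M\<bar> + 1)" by (auto simp: abs_if)
  then have "norm (gam i0 iL l (1/2)) > M" using big n1 by linarith
  then show ?thesis using l by blast
qed

lemma not_gh:
  fixes i0 iL :: "'n::finite"
  assumes "i0 \<noteq> iL"
  shows "\<not> glob_hyp i0 (Cp i0 iL)" "\<not> glob_hyp i0 (Cm i0 iL)"
proof -
  have in0: "gam i0 iL 0 0 \<in> Cp i0 iL" "gam i0 iL 0 1 \<in> Cp i0 iL"
    using gam_in[OF assms, of 0] by auto
  {
    fix U :: "(real \<times> (real^'n)) set" and a b and sgn :: real
    assume sg: "sgn = 1 \<or> sgn = -1" and aU: "a \<in> U" "b \<in> U"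
      and cc: "\<And>l. 0 \<le> l \<Longrightarrow> l < 2/5 \<Longrightarrow> causal_curve i0 U (\<lambda>t. sgn *\<^sub>R gam i0 iL l t) a b"
    define J where "J = {\<gamma> t | \<gamma> t. causal_curve i0 U \<gamma> a b \<and> t \<in> {0..1}}"
    have JU: "J \<subseteq> U" unfolding J_def causal_curve_def by auto
    have "J \<subseteq> U \<inter> closure J" using JU closure_subset by auto
    moreover have "\<not> bounded J"
    proof
      assume "bounded J"
      then obtain M where M: "\<And>x. x \<in> J \<Longrightarrow> norm x \<le> M" by (auto simp: bounded_iff)
      obtain l where l: "0 \<le> l" "l < 2/5" "norm (gam i0 iL l (1/2)) > M" using gam_big[OF assms] by blast
      have "sgn *\<^sub>R gam i0 iL l (1/2) \<in> J" unfolding J_def using cc[OF l(1,2)] by force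
      then have "norm (sgn *\<^sub>R gam i0 iL l (1/2)) \<le> M" by (rule M)
      moreover have "norm (sgn *\<^sub>R gam i0 iL l (1/2)) = norm (gam i0 iL l (1/2))" using sg by auto
      ultimately show False using l by linarith
    qed
    ultimately have "\<not> bounded (U \<inter> closure J)" using bounded_subset by blast
    then have "\<not> glob_hyp i0 U" unfolding glob_hyp_def using aU compact_imp_bounded J_def by blast
  } note main = this
  show "\<not> glob_hyp i0 (Cp i0 iL)"
    by (rule main[of 1 "gam i0 iL 0 0" _ "gam i0 iL 0 1"]) (use in0 gam_causal(1)[OF assms] in auto)
  have inm: "- gam i0 iL 0 0 \<in> Cm i0 iL" "- gam i0 iL 0 1 \<in> Cm i0 iL"
    using in0 by (auto simp: Cm_eq[OF assms])
  show "\<not> glob_hyp i0 (Cm i0 iL)"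
    by (rule main[of "-1" "- gam i0 iL 0 0" _ "- gam i0 iL 0 1"]) (use inm gam_causal(2)[OF assms] in auto)
qed


theorem proposition7p6:
  fixes i0 iL :: "'n::finite"
  assumes "i0 \<noteq> iL"
  shows "(\<forall>x\<in>posAdS i0 iL. \<exists>v. proj_eq (eta_rep i0 v) (ads_emb x))
       \<and> {v. \<exists>x\<in>posAdS i0 iL. proj_eq (eta_rep i0 v) (ads_emb x)}
            = posV i0 iL - {v. mbeta i0 v v = -1}
       \<and> posV i0 iL = {v. v$iL > \<bar>v$i0\<bar>}
       \<and> card (components (posAdS i0 iL)) = 2
       \<and> (\<forall>C\<in>components (posAdS i0 iL). \<not> glob_hyp i0 C)"
  proof -
  have 1: "\<forall>x\<in>posAdS i0 iL. \<exists>v. proj_eq (eta_rep i0 v) (ads_emb x)"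
    using partA1[OF assms] by blast
  have 5: "\<forall>C\<in>components (posAdS i0 iL). \<not> glob_hyp i0 C"
    unfolding components_posAdS[OF assms] using not_gh[OF assms] by auto
  show ?thesis using 1 partA2[OF assms] posV_char[OF assms] card_components[OF assms] 5 by blast
qed

end
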